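(* Let $(\Omega,\mathcal{A},\mu)$ be a diffuse $\sigma$-finite measure space, let $p\in[1,\infty)$, and let $q\in(1,\infty]$ with $\frac1p+\frac1q=1$. Let $\eta\in L_q(\mu)$ and $g\in L_p(\mu)$ with $\eta\ge0$, $g\ge0$, and define $K\in\mathcal{L}(L_p(\mu))$ by \[ Kf:=\Bigl(\int\eta f\,d\mu\Bigr)g\qquad(f\in L_p(\mu)). \] Let $u\in L_\infty(\mu)$ with $u\ge0$ be such that $M_u\le K$, i.e. $K-M_u$ is a positive operator. Then $u=0$.
   Context: $\mu$ is diffuse if every measurable $A$ with $\mu(A)>0$ contains a measurable $A'$ with $0<\mu(A')<\mu(A)$. $M_u$ is the multiplication operator $M_uf:=uf$ on $L_p(\mu)$. An operator $S\in\mathcal{L}(L_p(\mu))$ is positive if $Sf\ge0$ for all $f\ge0$ in $L_p(\mu)$; $S\le T$ means $T-S$ is positive. *)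

theory Defs
  imports "HOL-Analysis.Analysis"
begin

definition diffuse :: "'a measure \<Rightarrow> bool" where
  "diffuse M \<longleftrightarrow> (\<forall>A \<in> sets M. emeasure M A > 0 \<longrightarrow>
      (\<exists>A' \<in> sets M. A' \<subseteq> A \<and> 0 < emeasure M A' \<and> emeasure M A' < emeasure M A))"

definition memLp :: "'a measure \<Rightarrow> real \<Rightarrow> ('a \<Rightarrow> real) \<Rightarrow> bool" where
  "memLp M p f \<longleftrightarrow> f \<in> borel_measurable M \<and> integrable M (\<lambda>x. \<bar>f x\<bar> powr p)"

definition memLinf :: "'a measure \<Rightarrow> ('a \<Rightarrow> real) \<Rightarrow> bool" where
  "memLinf M f \<longleftrightarrow> f \<in> borel_measurable M \<and> (\<exists>C. AE x in M. \<bar>f x\<bar> \<le> C)"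

definition memLq :: "'a measure \<Rightarrow> ereal \<Rightarrow> ('a \<Rightarrow> real) \<Rightarrow> bool" where
  "memLq M q f \<longleftrightarrow> (if q = \<infinity> then memLinf M f else memLp M (real_of_ereal q) f)"

end

theory Submission
  imports Defs
begin

lemma diffuse_halving:
  assumes dif: "diffuse M" and A: "A \<in> sets M" "emeasure M A < \<infinity>" "0 < emeasure M A"
  shows "\<exists>B\<in>sets M. B \<subseteq> A \<and> 0 < measure M B \<and> measure M B \<le> measure M A / 2 ^ n"
proof (induction n)
  case 0
  have "0 < measure M A" using A by (simp add: emeasure_eq_ennreal_measure measure_nonneg)
  then show ?case using A by auto
next
  case (Suc n)
  then obtain B where B: "B \<in> sets M" "B \<subseteq> A" "0 < measure M B" "measure M B \<le> measure M A / 2 ^ n"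
    by blast
  have finB: "emeasure M B \<noteq> \<infinity>"
    using emeasure_mono[OF B(2) A(1)] A(2) by (auto simp: top_unique)
  have eB: "emeasure M B = ennreal (measure M B)" using finB by (simp add: emeasure_eq_ennreal_measure)
  have "emeasure M B > 0" using B(3) eB by simp
  then obtain B' where B': "B' \<in> sets M" "B' \<subseteq> B" "0 < emeasure M B'" "emeasure M B' < emeasure M B"
    using dif B(1) unfolding diffuse_def by blast
  have finB': "emeasure M B' \<noteq> \<infinity>"
    using emeasure_mono[OF B'(2) B(1)] finB by (auto simp: top_unique)
  have eB': "emeasure M B' = ennreal (measure M B')" using finB' by (simp add: emeasure_eq_ennreal_measure)
  have m1: "0 < measure M B'" using B'(3) eB' by (simp add: measure_nonneg)
  have m2': "ennreal (measure M B') < ennreal (measure M B)" using B'(4) eB eB' by simp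
  have m2: "measure M B' < measure M B" using m2' by (simp add: ennreal_less_iff measure_nonneg)
  have md: "measure M (B - B') = measure M B - measure M B'"
    using measure_Diff[OF finB B(1) B'(1) B'(2)] .
  have half: "measure M B / 2 \<le> measure M A / 2 ^ Suc n" using B(4) by simp
  show ?case
  proof (cases "measure M B' \<le> measure M B / 2")
    case True
    then have "measure M B' \<le> measure M A / 2 ^ Suc n" using half by linarith
    then show ?thesis using B(2) B'(1,2) m1 by blast
  next
    case False
    then have "measure M (B - B') \<le> measure M A / 2 ^ Suc n" using md half by linarith
    moreover have "0 < measure M (B - B')" using md m2 by linarith
    moreover have "B - B' \<in> sets M" using B(1) B'(1) by blast
    ultimately show ?thesis using B(2) by blast
  qed
qed

lemma diffuse_small:
  assumes dif: "diffuse M" and A: "A \<in> sets M" "emeasure M A < \<infinity>" "0 < emeasure M A"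
    and d: "(d::real) > 0"
  shows "\<exists>B\<in>sets M. B \<subseteq> A \<and> 0 < measure M B \<and> measure M B < d"
proof -
  obtain n where n: "measure M A / d < 2 ^ n"
    using real_arch_pow[of 2 "measure M A / d"] by auto
  then have "measure M A / 2 ^ n < d" using d by (simp add: divide_less_eq mult.commute)
  moreover obtain B where "B \<in> sets M" "B \<subseteq> A" "0 < measure M B" "measure M B \<le> measure M A / 2 ^ n"
    using diffuse_halving[OF assms(1-4), of n] by blast
  ultimately show ?thesis by (intro bexI[of _ B]) auto
qed

theorem lemma3p1:
  fixes M :: "'a measure" and p :: real and q :: ereal
    and \<eta> g u :: "'a \<Rightarrow> real"
  assumes "sigma_finite_measure M" and "diffuse M"
    and "1 \<le> p" and "1 < q" and "1 / ereal p + 1 / q = 1"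
    and "memLq M q \<eta>" and "AE x in M. \<eta> x \<ge> 0"
    and "memLp M p g" and "AE x in M. g x \<ge> 0"
    and "memLinf M u" and "AE x in M. u x \<ge> 0"
    and pos: "\<And>f. memLp M p f \<Longrightarrow> (AE x in M. f x \<ge> 0) \<Longrightarrow>
              AE x in M. (\<integral>y. \<eta> y * f y \<partial>M) * g x - u x * f x \<ge> 0"
  shows "AE x in M. u x = 0"
proof (rule ccontr)
  assume nz: "\<not> (AE x in M. u x = 0)"
  have meta[measurable]: "\<eta> \<in> borel_measurable M"
    using assms(6) by (auto simp: memLq_def memLinf_def memLp_def split: if_splits)
  have megs[measurable]: "g \<in> borel_measurable M" using assms(8) by (simp add: memLp_def)
  have meus[measurable]: "u \<in> borel_measurable M" using assms(10) by (simp add: memLinf_def)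
  obtain F :: "nat \<Rightarrow> 'a set" where F: "range F \<subseteq> sets M" "(\<Union>i. F i) = space M"
    "\<And>i. emeasure M (F i) \<noteq> \<infinity>" "incseq F"
    using sigma_finite_measure.sigma_finite_incseq[OF assms(1)] by metis
  define A where "A m = {x\<in>space M. 1 / real (Suc m) \<le> u x \<and> \<bar>\<eta> x\<bar> \<le> real m \<and> \<bar>g x\<bar> \<le> real m} \<inter> F m" for m
  have Asets: "A m \<in> sets M" for m
    unfolding A_def using F(1) by (intro sets.Int) auto
  have "\<exists>m. emeasure M (A m) \<noteq> 0"
  proof (rule ccontr)
    assume "\<not> (\<exists>m. emeasure M (A m) \<noteq> 0)"
    then have "\<And>m. A m \<in> null_sets M" using Asets by auto
    then have "AE x in M. \<forall>m. x \<notin> A m" by (simp add: AE_all_countable AE_not_in)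
    then have "AE x in M. u x = 0"
      using assms(11) AE_space
    proof eventually_elim
      case (elim x)
      show ?case
      proof (rule ccontr)
        assume "u x \<noteq> 0"
        then have ux: "u x > 0" using elim by simp
        obtain m0 where m0: "x \<in> F m0" using F(2) elim by auto
        obtain m1 where m1: "inverse (real (Suc m1)) < u x" using reals_Archimedean[OF ux] by blast
        define m where "m = max m0 (max m1 (max (nat \<lceil>\<bar>\<eta> x\<bar>\<rceil>) (nat \<lceil>\<bar>g x\<bar>\<rceil>)))"
        have "x \<in> F m" using m0 F(4) unfolding m_def by (meson incseqD max.cobounded1 subsetD)
        moreover have "1 / real (Suc m) \<le> u x"
        proof -
          have "m1 \<le> m" unfolding m_def by (simp add: le_max_iff_disj)
          then have "1 / real (Suc m) \<le> 1 / real (Suc m1)"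
            by (intro divide_left_mono) auto
          then show ?thesis using m1 by (simp add: inverse_eq_divide)
        qed
        moreover have "\<bar>\<eta> x\<bar> \<le> real m"
        proof -
          have "nat \<lceil>\<bar>\<eta> x\<bar>\<rceil> \<le> m" unfolding m_def by (simp add: le_max_iff_disj)
          then have "real (nat \<lceil>\<bar>\<eta> x\<bar>\<rceil>) \<le> real m" by (rule of_nat_mono)
          moreover have "\<bar>\<eta> x\<bar> \<le> real (nat \<lceil>\<bar>\<eta> x\<bar>\<rceil>)" by (rule real_nat_ceiling_ge)
          ultimately show ?thesis by linarith
        qed
        moreover have "\<bar>g x\<bar> \<le> real m"
        proof -
          have "nat \<lceil>\<bar>g x\<bar>\<rceil> \<le> m" unfolding m_def by (simp add: le_max_iff_disj)
          then have "real (nat \<lceil>\<bar>g x\<bar>\<rceil>) \<le> real m" by (rule of_nat_mono)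
          moreover have "\<bar>g x\<bar> \<le> real (nat \<lceil>\<bar>g x\<bar>\<rceil>)" by (rule real_nat_ceiling_ge)
          ultimately show ?thesis by linarith
        qed
        ultimately have "x \<in> A m" using elim unfolding A_def by auto
        then show False using elim by auto
      qed
    qed
    then show False using nz by simp
  qed
  then obtain m where mA: "emeasure M (A m) \<noteq> 0" by blast
  have Afin: "emeasure M (A m) < \<infinity>"
  proof -
    have "A m \<subseteq> F m" unfolding A_def by blast
    then have "emeasure M (A m) \<le> emeasure M (F m)" using F(1) by (intro emeasure_mono) auto
    then have "emeasure M (A m) \<noteq> \<infinity>" using F(3)[of m] by (auto simp: top_unique)
    then show ?thesis by (simp add: less_top)
  qed
  define \<epsilon> where "\<epsilon> = 1 / real (Suc m)"
  define N where "N = real m"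
  have epos: "\<epsilon> > 0" unfolding \<epsilon>_def by simp
  have N0: "N \<ge> 0" unfolding N_def by simp
  obtain B where B: "B \<in> sets M" "B \<subseteq> A m" "0 < measure M B" "measure M B < \<epsilon> / (N^2 + 1)"
  proof -
    have "0 < \<epsilon> / (N^2 + 1)" using epos N0 by (intro divide_pos_pos) (auto intro: add_nonneg_pos)
    moreover have "0 < emeasure M (A m)" using mA by (simp add: zero_less_iff_neq_zero)
    ultimately show ?thesis using diffuse_small[OF assms(2) Asets Afin] that by blast
  qed
  have Bfin: "emeasure M B < \<infinity>" using emeasure_mono[OF B(2) Asets] Afin by auto
  have mem: "memLp M p (indicator B)"
  proof -
    have "(\<lambda>x. \<bar>indicator B x :: real\<bar> powr p) = indicator B"
      by (rule ext) (simp add: indicator_def)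
    then show ?thesis unfolding memLp_def using B(1) Bfin by simp
  qed
  define c where "c = (\<integral>y. \<eta> y * indicator B y \<partial>M)"
  have AEc: "AE x in M. c * g x - u x * indicator B x \<ge> 0"
    using pos[OF mem] unfolding c_def by simp
  have intN: "integrable M (\<lambda>x. N * indicator B x)" using B(1) Bfin by simp
  have inteta: "integrable M (\<lambda>x. \<eta> x * indicator B x)"
  proof (rule Bochner_Integration.integrable_bound[OF intN])
    show "(\<lambda>x. \<eta> x * indicator B x) \<in> borel_measurable M" using B(1) by measurable
    show "AE x in M. norm (\<eta> x * indicator B x) \<le> norm (N * indicator B x)"
      using B(2) N0 unfolding A_def N_def by (auto simp: indicator_def)
  qed
  have cb: "\<bar>c\<bar> \<le> N * measure M B"
  proof -
    have "\<bar>c\<bar> \<le> (\<integral>x. \<bar>\<eta> x * indicator B x\<bar> \<partial>M)"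
      unfolding c_def by (rule integral_abs_bound)
    also have "\<dots> \<le> (\<integral>x. N * indicator B x \<partial>M)"
      using inteta intN B(2) N0 by (intro integral_mono) (auto simp: A_def N_def indicator_def)
    also have "\<dots> = N * measure M B" using B(1) Bfin by simp
    finally show ?thesis .
  qed
  have Bsp: "{x \<in> space M. \<not> x \<notin> B} = B" using sets.sets_into_space[OF B(1)] by blast
  have nAE: "\<not> (AE x in M. x \<notin> B)"
  proof
    assume "AE x in M. x \<notin> B"
    then have "emeasure M B = 0" using AE_iff_measurable[OF B(1) Bsp] by simp
    then show False using B(3) by (simp add: measure_def)
  qed
  have "\<exists>x\<in>B. c * g x - u x * indicator B x \<ge> 0"
  proof (rule ccontr)
    assume nx: "\<not> (\<exists>x\<in>B. c * g x - u x * indicator B x \<ge> 0)"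
    have "AE x in M. x \<notin> B" using AEc
    proof eventually_elim
      case (elim x) then show ?case using nx by blast
    qed
    then show False using nAE by simp
  qed
  then obtain x where x: "x \<in> B" "c * g x - u x * indicator B x \<ge> 0" by blast
  have "x \<in> A m" using B(2) x(1) by blast
  then have xA0: "1 / real (Suc m) \<le> u x" "\<bar>g x\<bar> \<le> real m" by (simp_all add: A_def)
  have xA: "\<epsilon> \<le> u x" "\<bar>g x\<bar> \<le> N" using xA0 by (simp_all add: \<epsilon>_def N_def)
  have "c * g x - u x \<ge> 0" using x by simp
  then have "\<epsilon> \<le> c * g x" using xA(1) by linarith
  also have "c * g x \<le> \<bar>c * g x\<bar>" by (rule abs_ge_self)
  also have "\<dots> = \<bar>c\<bar> * \<bar>g x\<bar>" by (rule abs_mult)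
  also have "\<dots> \<le> (N * measure M B) * N"
    using cb xA(2) N0 by (intro mult_mono) (auto simp: measure_nonneg)
  also have "\<dots> = N^2 * measure M B" by (simp add: power2_eq_square)
  also have "\<dots> \<le> N^2 * (\<epsilon> / (N^2 + 1))" using B(4) by (intro mult_left_mono) auto
  also have "\<dots> = \<epsilon> * (N^2 / (N^2 + 1))" by simp
  also have "\<dots> < \<epsilon> * 1"
  proof (rule mult_strict_left_mono[OF _ epos])
    have "0 < N^2 + 1" by (simp add: add_nonneg_pos)
    then show "N^2 / (N^2 + 1) < 1" by (simp add: divide_less_eq)
  qed
  finally show False by simp
qed

end
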